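(* Let $c$ be a command and $\rho_1,\rho_2,\mu_1,\mu_2$ states with $\mathtt b\notin\mathrm{UsedVars}(c)$, $\rho_1(\mathtt b)=\rho_2(\mathtt b)=0$, $|a|_{\mu_1}>0$ and $|a|_{\mu_2}>0$ for every array $a$, and $\langle c,\rho_1,\mu_1\rangle\approx\langle c,\rho_2,\mu_2\rangle$. Then $\langle\mathrm{USLH}(c),\rho_1,\mu_1,\mathtt{false}\rangle\approx_s\langle\mathrm{USLH}(c),\rho_2,\mu_2,\mathtt{false}\rangle$.
   Context: Language AWhile: scalar variables $X\in\mathcal V$, array names $a\in\mathcal A$. Arithmetic expressions $e::=n\ (n\in\mathbb N)\mid X\mid \mathrm{op}_{\mathbb N}(e,\dots,e)\mid be\,?\,e_1:e_2$; boolean expressions $be::=\mathtt{true}\mid\mathtt{false}\mid\mathrm{cmp}(e,e)\mid\mathrm{op}_{\mathbb B}(be,\dots,be)$; commands $c::=\mathtt{skip}\mid X:=e\mid c_1;c_2\mid \mathtt{if}\ be\ \mathtt{then}\ c_1\ \mathtt{else}\ c_2\mid\mathtt{while}\ be\ \mathtt{do}\ c\mid X\leftarrow a[e]\mid a[e]\leftarrow e'$. A scalar state is $\rho:\mathcal V\to\mathbb N$; an array state $\mu$ gives each array $a$ a size $|a|_\mu$ and values $\mu(a)[i]$ for $0\le i<|a|_\mu$. $[\![\cdot]\!]_\rho$ is the usual pure evaluation. $\mathrm{UsedVars}(c)$ is the set of scalar variables occurring in $c$; $\mathtt b$ is a reserved scalar variable. Sequential semantics: steps $\langle c,\rho,\mu\rangle\xrightarrow{o}\langle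 c',\rho',\mu'\rangle$, $o$ an optional observation $\mathrm{branch}(v)$, $\mathrm{read}(a,i)$, $\mathrm{write}(a,i)$. $X:=e\to\mathtt{skip}$ with $\rho[X\mapsto[\![e]\!]_\rho]$, no obs; $c_1;c_2\xrightarrow{o}c_1';c_2$ if $c_1\xrightarrow{o}c_1'$; $\mathtt{skip};c\to c$; $\mathtt{if}\ be\ \mathtt{then}\ c_{\mathtt{true}}\ \mathtt{else}\ c_{\mathtt{false}}\to c_v$, $v=[\![be]\!]_\rho$, obs $\mathrm{branch}(v)$; $\mathtt{while}\ be\ \mathtt{do}\ c\to\mathtt{if}\ be\ \mathtt{then}\ (c;\mathtt{while}\ be\ \mathtt{do}\ c)\ \mathtt{else}\ \mathtt{skip}$; $X\leftarrow a[ie]\to\mathtt{skip}$ setting $X$ to $\mu(a)[i]$, obs $\mathrm{read}(a,i)$, if $i=[\![ie]\!]_\rho<|a|_\mu$; $a[ie]\leftarrow e\to\mathtt{skip}$ with $\mu[a[i]\mapsto[\![e]\!]_\rho]$, obs $\mathrm{write}(a,i)$, if $i<|a|_\mu$. $\xrightarrow{O}{}^*$ is the reflexive-transitive closure collecting observations. $\langle c_1,\rho_1,\mu_1\rangle\approx\langle c_2,\rho_2,\mu_2\rangle$ iff for all $O_1,O_2$ with $\langle c_k,\rho_k,\mu_k\rangle\xrightarrow{O_k}{}^*$ some configuration, one of $O_1,O_2$ is a prefix of the other. Speculative semantics: configurations $\langle c,\rho,\mu,\beta\rangle$ with boolean flag $\beta$; steps labelled by an optional observation and optional directive $d\in\{\mathit{step},\mathit{force},\mathrm{load}(a',j),\mathrm{store}(a',j)\}$.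 Non-observing rules as sequentially (flag kept, no directive). Conditional: with $\mathit{step}$ as sequentially; with $\mathit{force}$ go to branch $\neg[\![be]\!]_\rho$ and set $\beta:=\mathtt{true}$; both observe $\mathrm{branch}([\![be]\!]_\rho)$. Read/write with $\mathit{step}$ as sequentially. Read with $\mathrm{load}(a',j)$: requires $\beta=\mathtt{true}$, $i=[\![ie]\!]_\rho\ge|a|_\mu$, $j<|a'|_\mu$, sets $X$ to $\mu(a')[j]$, obs $\mathrm{read}(a,i)$. Write with $\mathrm{store}(a',j)$: requires $\beta=\mathtt{true}$, $i\ge|a|_\mu$, $j<|a'|_\mu$, sets $\mu[a'[j]\mapsto[\![e]\!]_\rho]$, obs $\mathrm{write}(a,i)$. $\langle c_1,\rho_1,\mu_1,\beta_1\rangle\approx_s\langle c_2,\rho_2,\mu_2,\beta_2\rangle$ iff for all $D,O_1,O_2$, if both configurations multi-step with the same directive list $D$ producing $O_1$ resp. $O_2$, then $O_1=O_2$. Ultimate SLH: $\mathrm{USLH}(\mathtt{skip})=\mathtt{skip}$; $\mathrm{USLH}(X:=e)=X:=e$; $\mathrm{USLH}(c_1;c_2)=\mathrm{USLH}(c_1);\mathrm{USLH}(c_2)$; with $B(be)=(\mathtt b==0\ \&\&\ be)$: $\mathrm{USLH}(\mathtt{if}\ be\ \mathtt{then}\ c_1\ \mathtt{else}\ c_2)=\mathtt{if}\ B(be)\ \mathtt{then}\ (\mathtt b:=B(be)\,?\,\mathtt b:1;\mathrm{USLH}(c_1))\ \mathtt{else}\ (\mathtt b:=B(be)\,?\,1:\mathtt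 b;\mathrm{USLH}(c_2))$; $\mathrm{USLH}(\mathtt{while}\ be\ \mathtt{do}\ c)=(\mathtt{while}\ B(be)\ \mathtt{do}\ (\mathtt b:=B(be)\,?\,\mathtt b:1;\mathrm{USLH}(c)));\ \mathtt b:=B(be)\,?\,1:\mathtt b$; $\mathrm{USLH}(X\leftarrow a[i])=X\leftarrow a[(\mathtt b==1)\,?\,0:i]$; $\mathrm{USLH}(a[i]\leftarrow e)=a[(\mathtt b==1)\,?\,0:i]\leftarrow e$. *)

theory Defs
  imports Main "HOL-Library.Sublist"
begin

type_synonym vname = string
type_synonym aname = string

datatype aexp = ANum nat | AVar vname | AOp "nat list \<Rightarrow> nat" "aexp list"
              | ACond bexp aexp aexp
     and bexp = BTrue | BFalse | BCmp "nat \<Rightarrow> nat \<Rightarrow> bool" aexp aexp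
              | BOp "bool list \<Rightarrow> bool" "bexp list"

datatype com = Skip | Assign vname aexp | Seq com com | If bexp com com
             | While bexp com | ARead vname aname aexp | AWrite aname aexp aexp

type_synonym sstate = "vname \<Rightarrow> nat"
(* array state: each array is a list; its size is the length *)
type_synonym astate = "aname \<Rightarrow> nat list"

primrec aeval :: "sstate \<Rightarrow> aexp \<Rightarrow> nat" and beval :: "sstate \<Rightarrow> bexp \<Rightarrow> bool" where
  "aeval \<rho> (ANum n) = n"
| "aeval \<rho> (AVar x) = \<rho> x"
| "aeval \<rho> (AOp f es) = f (map (aeval \<rho>) es)"
| "aeval \<rho> (ACond b e1 e2) = (if beval \<rho> b then aeval \<rho> e1 else aeval \<rho> e2)"
| "beval \<rho> BTrue = True"
| "beval \<rho> BFalse = False"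
| "beval \<rho> (BCmp f e1 e2) = f (aeval \<rho> e1) (aeval \<rho> e2)"
| "beval \<rho> (BOp f bs) = f (map (beval \<rho>) bs)"

primrec avars :: "aexp \<Rightarrow> vname set" and bvars :: "bexp \<Rightarrow> vname set" where
  "avars (ANum n) = {}"
| "avars (AVar x) = {x}"
| "avars (AOp f es) = \<Union> (set (map avars es))"
| "avars (ACond b e1 e2) = bvars b \<union> avars e1 \<union> avars e2"
| "bvars BTrue = {}"
| "bvars BFalse = {}"
| "bvars (BCmp f e1 e2) = avars e1 \<union> avars e2"
| "bvars (BOp f bs) = \<Union> (set (map bvars bs))"

primrec used_vars :: "com \<Rightarrow> vname set" where
  "used_vars Skip = {}"
| "used_vars (Assign x e) = {x} \<union> avars e"
| "used_vars (Seq c1 c2) = used_vars c1 \<union> used_vars c2"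
| "used_vars (If b c1 c2) = bvars b \<union> used_vars c1 \<union> used_vars c2"
| "used_vars (While b c) = bvars b \<union> used_vars c"
| "used_vars (ARead x a i) = {x} \<union> avars i"
| "used_vars (AWrite a i e) = avars i \<union> avars e"

datatype obs = OBranch bool | ORead aname nat | OWrite aname nat

datatype direction = DStep | DForce | DLoad aname nat | DStore aname nat

(* Sequential semantics; an optional observation is a list of length <= 1. *)
inductive seq_step :: "com \<Rightarrow> sstate \<Rightarrow> astate \<Rightarrow> obs list \<Rightarrow> com \<Rightarrow> sstate \<Rightarrow> astate \<Rightarrow> bool" where
  Seq_Assign: "seq_step (Assign x e) \<rho> \<mu> [] Skip (\<rho>(x := aeval \<rho> e)) \<mu>"
| Seq_Seq: "seq_step c1 \<rho> \<mu> os c1' \<rho>' \<mu>' \<Longrightarrow> seq_step (Seq c1 c2) \<rho> \<mu> os (Seq c1' c2) \<rho>' \<mu>'"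
| Seq_Skip: "seq_step (Seq Skip c) \<rho> \<mu> [] c \<rho> \<mu>"
| Seq_If: "v = beval \<rho> b \<Longrightarrow>
    seq_step (If b c1 c2) \<rho> \<mu> [OBranch v] (if v then c1 else c2) \<rho> \<mu>"
| Seq_While: "seq_step (While b c) \<rho> \<mu> [] (If b (Seq c (While b c)) Skip) \<rho> \<mu>"
| Seq_Read: "i = aeval \<rho> ie \<Longrightarrow> i < length (\<mu> a) \<Longrightarrow>
    seq_step (ARead x a ie) \<rho> \<mu> [ORead a i] Skip (\<rho>(x := \<mu> a ! i)) \<mu>"
| Seq_Write: "i = aeval \<rho> ie \<Longrightarrow> i < length (\<mu> a) \<Longrightarrow>
    seq_step (AWrite a ie e) \<rho> \<mu> [OWrite a i] Skip \<rho> (\<mu>(a := (\<mu> a)[i := aeval \<rho> e]))"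

inductive seq_multi :: "com \<Rightarrow> sstate \<Rightarrow> astate \<Rightarrow> obs list \<Rightarrow> com \<Rightarrow> sstate \<Rightarrow> astate \<Rightarrow> bool" where
  seq_refl: "seq_multi c \<rho> \<mu> [] c \<rho> \<mu>"
| seq_trans: "seq_step c \<rho> \<mu> os c' \<rho>' \<mu>' \<Longrightarrow> seq_multi c' \<rho>' \<mu>' os' c'' \<rho>'' \<mu>'' \<Longrightarrow>
    seq_multi c \<rho> \<mu> (os @ os') c'' \<rho>'' \<mu>''"

definition seq_equiv :: "com \<Rightarrow> sstate \<Rightarrow> astate \<Rightarrow> com \<Rightarrow> sstate \<Rightarrow> astate \<Rightarrow> bool" where
  "seq_equiv c1 \<rho>1 \<mu>1 c2 \<rho>2 \<mu>2 \<longleftrightarrow>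
    (\<forall>O1 O2 c1' \<rho>1' \<mu>1' c2' \<rho>2' \<mu>2'.
       seq_multi c1 \<rho>1 \<mu>1 O1 c1' \<rho>1' \<mu>1' \<longrightarrow> seq_multi c2 \<rho>2 \<mu>2 O2 c2' \<rho>2' \<mu>2' \<longrightarrow>
       prefix O1 O2 \<or> prefix O2 O1)"

(* Speculative semantics; optional directive and observation are lists of length <= 1. *)
inductive spec_step :: "com \<Rightarrow> sstate \<Rightarrow> astate \<Rightarrow> bool \<Rightarrow> direction list \<Rightarrow> obs list
    \<Rightarrow> com \<Rightarrow> sstate \<Rightarrow> astate \<Rightarrow> bool \<Rightarrow> bool" where
  Spec_Assign: "spec_step (Assign x e) \<rho> \<mu> \<beta> [] [] Skip (\<rho>(x := aeval \<rho> e)) \<mu> \<beta>"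
| Spec_Seq: "spec_step c1 \<rho> \<mu> \<beta> ds os c1' \<rho>' \<mu>' \<beta>' \<Longrightarrow>
    spec_step (Seq c1 c2) \<rho> \<mu> \<beta> ds os (Seq c1' c2) \<rho>' \<mu>' \<beta>'"
| Spec_Skip: "spec_step (Seq Skip c) \<rho> \<mu> \<beta> [] [] c \<rho> \<mu> \<beta>"
| Spec_If: "v = beval \<rho> b \<Longrightarrow>
    spec_step (If b c1 c2) \<rho> \<mu> \<beta> [DStep] [OBranch v] (if v then c1 else c2) \<rho> \<mu> \<beta>"
| Spec_If_Force: "v = beval \<rho> b \<Longrightarrow>
    spec_step (If b c1 c2) \<rho> \<mu> \<beta> [DForce] [OBranch v] (if v then c2 else c1) \<rho> \<mu> True"
| Spec_While: "spec_step (While b c) \<rho> \<mu> \<beta> [] [] (If b (Seq c (While b c)) Skip) \<rho> \<mu> \<beta>"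
| Spec_Read: "i = aeval \<rho> ie \<Longrightarrow> i < length (\<mu> a) \<Longrightarrow>
    spec_step (ARead x a ie) \<rho> \<mu> \<beta> [DStep] [ORead a i] Skip (\<rho>(x := \<mu> a ! i)) \<mu> \<beta>"
| Spec_Read_Force: "\<beta> = True \<Longrightarrow> i = aeval \<rho> ie \<Longrightarrow> i \<ge> length (\<mu> a) \<Longrightarrow> j < length (\<mu> a') \<Longrightarrow>
    spec_step (ARead x a ie) \<rho> \<mu> \<beta> [DLoad a' j] [ORead a i] Skip (\<rho>(x := \<mu> a' ! j)) \<mu> \<beta>"
| Spec_Write: "i = aeval \<rho> ie \<Longrightarrow> i < length (\<mu> a) \<Longrightarrow>
    spec_step (AWrite a ie e) \<rho> \<mu> \<beta> [DStep] [OWrite a i] Skip \<rho> (\<mu>(a := (\<mu> a)[i := aeval \<rho> e])) \<beta>"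
| Spec_Write_Force: "\<beta> = True \<Longrightarrow> i = aeval \<rho> ie \<Longrightarrow> i \<ge> length (\<mu> a) \<Longrightarrow> j < length (\<mu> a') \<Longrightarrow>
    spec_step (AWrite a ie e) \<rho> \<mu> \<beta> [DStore a' j] [OWrite a i] Skip \<rho> (\<mu>(a' := (\<mu> a')[j := aeval \<rho> e])) \<beta>"

inductive spec_multi :: "com \<Rightarrow> sstate \<Rightarrow> astate \<Rightarrow> bool \<Rightarrow> direction list \<Rightarrow> obs list
    \<Rightarrow> com \<Rightarrow> sstate \<Rightarrow> astate \<Rightarrow> bool \<Rightarrow> bool" where
  spec_refl: "spec_multi c \<rho> \<mu> \<beta> [] [] c \<rho> \<mu> \<beta>"
| spec_trans: "spec_step c \<rho> \<mu> \<beta> ds os c' \<rho>' \<mu>' \<beta>' \<Longrightarrow>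
    spec_multi c' \<rho>' \<mu>' \<beta>' ds' os' c'' \<rho>'' \<mu>'' \<beta>'' \<Longrightarrow>
    spec_multi c \<rho> \<mu> \<beta> (ds @ ds') (os @ os') c'' \<rho>'' \<mu>'' \<beta>''"

definition spec_equiv :: "com \<Rightarrow> sstate \<Rightarrow> astate \<Rightarrow> bool \<Rightarrow> com \<Rightarrow> sstate \<Rightarrow> astate \<Rightarrow> bool \<Rightarrow> bool" where
  "spec_equiv c1 \<rho>1 \<mu>1 \<beta>1 c2 \<rho>2 \<mu>2 \<beta>2 \<longleftrightarrow>
    (\<forall>D O1 O2 c1' \<rho>1' \<mu>1' \<beta>1' c2' \<rho>2' \<mu>2' \<beta>2'.
       spec_multi c1 \<rho>1 \<mu>1 \<beta>1 D O1 c1' \<rho>1' \<mu>1' \<beta>1' \<longrightarrow>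
       spec_multi c2 \<rho>2 \<mu>2 \<beta>2 D O2 c2' \<rho>2' \<mu>2' \<beta>2' \<longrightarrow> O1 = O2)"

definition bvar :: vname where "bvar = ''b''"

definition band :: "bool list \<Rightarrow> bool" where "band bs = (bs ! 0 \<and> bs ! 1)"

definition Bg :: "bexp \<Rightarrow> bexp" where
  "Bg be = BOp band [BCmp (=) (AVar bvar) (ANum 0), be]"

primrec uslh :: "com \<Rightarrow> com" where
  "uslh Skip = Skip"
| "uslh (Assign x e) = Assign x e"
| "uslh (Seq c1 c2) = Seq (uslh c1) (uslh c2)"
| "uslh (If be c1 c2) =
     If (Bg be) (Seq (Assign bvar (ACond (Bg be) (AVar bvar) (ANum 1))) (uslh c1))
                (Seq (Assign bvar (ACond (Bg be) (ANum 1) (AVar bvar))) (uslh c2))"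
| "uslh (While be c) =
     Seq (While (Bg be) (Seq (Assign bvar (ACond (Bg be) (AVar bvar) (ANum 1))) (uslh c)))
         (Assign bvar (ACond (Bg be) (ANum 1) (AVar bvar)))"
| "uslh (ARead x a i) = ARead x a (ACond (BCmp (=) (AVar bvar) (ANum 1)) (ANum 0) i)"
| "uslh (AWrite a i e) = AWrite a (ACond (BCmp (=) (AVar bvar) (ANum 1)) (ANum 0) i) e"

end

theory Submission
  imports Defs
begin

abbreviation A1 :: "bexp \<Rightarrow> com" where
  "A1 be \<equiv> Assign bvar (ACond (Bg be) (AVar bvar) (ANum 1))"
abbreviation A2 :: "bexp \<Rightarrow> com" where
  "A2 be \<equiv> Assign bvar (ACond (Bg be) (ANum 1) (AVar bvar))"

lemma beval_Bg[simp]: "beval \<rho> (Bg be) = (\<rho> bvar = 0 \<and> beval \<rho> be)"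
  by (simp add: Bg_def band_def)

inductive_cases SkipE: "spec_step Skip \<rho> \<mu> \<beta> ds os c' \<rho>' \<mu>' \<beta>'"
inductive_cases AssignE: "spec_step (Assign x e) \<rho> \<mu> \<beta> ds os c' \<rho>' \<mu>' \<beta>'"
inductive_cases SeqE: "spec_step (Seq c1 c2) \<rho> \<mu> \<beta> ds os c' \<rho>' \<mu>' \<beta>'"
inductive_cases IfE: "spec_step (If b c1 c2) \<rho> \<mu> \<beta> ds os c' \<rho>' \<mu>' \<beta>'"
inductive_cases WhileE: "spec_step (While b c) \<rho> \<mu> \<beta> ds os c' \<rho>' \<mu>' \<beta>'"
inductive_cases ReadE: "spec_step (ARead x a i) \<rho> \<mu> \<beta> ds os c' \<rho>' \<mu>' \<beta>'"
inductive_cases WriteE: "spec_step (AWrite a i e) \<rho> \<mu> \<beta> ds os c' \<rho>' \<mu>' \<beta>'"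

lemma no_step_Skip[simp]: "\<not> spec_step Skip \<rho> \<mu> \<beta> ds os c' \<rho>' \<mu>' \<beta>'"
  by (auto elim: SkipE)

inductive_cases sSkipE: "seq_step Skip \<rho> \<mu> os c' \<rho>' \<mu>'"

lemma step_len: "spec_step c \<rho> \<mu> \<beta> ds os c' \<rho>' \<mu>' \<beta>' \<Longrightarrow> length os = length ds \<and> length ds \<le> 1"
  by (induction rule: spec_step.induct) auto

lemma multi_len: "spec_multi c \<rho> \<mu> \<beta> D Os c' \<rho>' \<mu>' \<beta>' \<Longrightarrow> length Os = length D"
  by (induction rule: spec_multi.induct) (auto dest: step_len)

lemma step_align: "spec_step c \<rho> \<mu> \<beta> ds os c' \<rho>' \<mu>' \<beta>' \<Longrightarrow>
  spec_step c \<rho>2 \<mu>2 \<beta>2 ds2 os2 c2' \<rho>2' \<mu>2' \<beta>2' \<Longrightarrow> (ds = [] \<longleftrightarrow> ds2 = [])"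
proof (induction arbitrary: \<rho>2 \<mu>2 \<beta>2 ds2 os2 c2' \<rho>2' \<mu>2' \<beta>2' rule: spec_step.induct)
  case (Spec_Seq c1 \<rho> \<mu> \<beta> ds os c1' \<rho>' \<mu>' \<beta>' c2)
  show ?case
    apply (rule SeqE[OF Spec_Seq.prems])
    using Spec_Seq.IH apply blast
    using Spec_Seq.hyps by (auto elim: SkipE)
next
  case (Spec_Skip c) then show ?case by (auto elim: SeqE SkipE)
next
  case (Spec_Assign) then show ?case by (auto elim: AssignE)
next
  case (Spec_If) then show ?case by (auto elim: IfE)
next
  case (Spec_If_Force) then show ?case by (auto elim: IfE)
next
  case (Spec_While) then show ?case by (auto elim: WhileE)
next
  case (Spec_Read) then show ?case by (auto elim: ReadE)
next
  case (Spec_Read_Force) then show ?case by (auto elim: ReadE)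
next
  case (Spec_Write) then show ?case by (auto elim: WriteE)
next
  case (Spec_Write_Force) then show ?case by (auto elim: WriteE)
qed

lemma step_det: "spec_step c \<rho> \<mu> \<beta> ds os c' \<rho>' \<mu>' \<beta>' \<Longrightarrow>
  spec_step c \<rho>2 \<mu>2 \<beta>2 ds os c2' \<rho>2' \<mu>2' \<beta>2' \<Longrightarrow> c' = c2'"
proof (induction arbitrary: \<rho>2 \<mu>2 \<beta>2 c2' \<rho>2' \<mu>2' \<beta>2' rule: spec_step.induct)
  case (Spec_Seq c1 \<rho> \<mu> \<beta> ds os c1' \<rho>' \<mu>' \<beta>' c2)
  show ?case
    apply (rule SeqE[OF Spec_Seq.prems])
    using Spec_Seq.IH apply blast
    using Spec_Seq.hyps by (auto elim: SkipE)
next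
  case (Spec_Skip c) then show ?case by (auto elim: SeqE SkipE)
next
  case (Spec_Assign) then show ?case by (auto elim: AssignE)
next
  case (Spec_If) then show ?case by (auto elim: IfE)
next
  case (Spec_If_Force) then show ?case by (auto elim: IfE)
next
  case (Spec_While) then show ?case by (auto elim: WhileE)
next
  case (Spec_Read) then show ?case by (auto elim: ReadE)
next
  case (Spec_Read_Force) then show ?case by (auto elim: ReadE)
next
  case (Spec_Write) then show ?case by (auto elim: WriteE)
next
  case (Spec_Write_Force) then show ?case by (auto elim: WriteE)
qed

lemma step_nonempty: "spec_step c \<rho> \<mu> \<beta> ds os c' \<rho>' \<mu>' \<beta>' \<Longrightarrow> \<forall>a. length (\<mu> a) > 0 \<Longrightarrow> \<forall>a. length (\<mu>' a) > 0"
  by (induction rule: spec_step.induct) auto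

fun first :: "com \<Rightarrow> com" where
  "first (Seq c1 c2) = (if c1 = Skip then first c2 else first c1)"
| "first c = c"

fun obsB :: "com \<Rightarrow> obs list" where
  "obsB (Seq c1 c2) = (if c1 = Skip then [] else obsB c1)"
| "obsB (If _ _ _) = [OBranch False]"
| "obsB (ARead x a _) = [ORead a 0]"
| "obsB (AWrite a _ _) = [OWrite a 0]"
| "obsB _ = []"

definition isG :: "bexp \<Rightarrow> bool" where "isG g = (\<exists>be. g = Bg be)"
definition idx :: "aexp \<Rightarrow> bool" where
  "idx ie = (\<exists>i. ie = ACond (BCmp (=) (AVar bvar) (ANum 1)) (ANum 0) i)"

fun safe :: "com \<Rightarrow> bool" where
  "safe Skip = True"
| "safe (Assign x e) = (x \<noteq> bvar \<or> (\<exists>be. e = ACond (Bg be) (AVar bvar) (ANum 1) \<or> e = ACond (Bg be) (ANum 1) (AVar bvar)))"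
| "safe (Seq c1 c2) = (safe c1 \<and> safe c2)"
| "safe (If g c1 c2) = (isG g \<and> safe c1 \<and> safe c2)"
| "safe (While g c) = (isG g \<and> safe c)"
| "safe (ARead x a ie) = (x \<noteq> bvar \<and> idx ie)"
| "safe (AWrite a ie e) = idx ie"

lemma safe_uslh: "bvar \<notin> used_vars s \<Longrightarrow> safe (uslh s)"
  by (induction s) (auto simp: isG_def idx_def)

definition PB :: "com \<Rightarrow> sstate \<Rightarrow> astate \<Rightarrow> bool" where
  "PB c \<rho> \<mu> = (safe c \<and> (\<forall>a. length (\<mu> a) > 0) \<and>
     (\<rho> bvar = 1 \<or> (\<exists>e. first c = Assign bvar e \<and> aeval \<rho> e = 1)))"

lemma PB_step: "spec_step c \<rho> \<mu> \<beta> ds os c' \<rho>' \<mu>' \<beta>' \<Longrightarrow> PB c \<rho> \<mu> \<Longrightarrow>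
   os = obsB c \<and> PB c' \<rho>' \<mu>'"
proof (induction rule: spec_step.induct)
  case (Spec_Seq c1 \<rho> \<mu> \<beta> ds os c1' \<rho>' \<mu>' \<beta>' c2)
  have ns: "c1 \<noteq> Skip" using Spec_Seq.hyps by auto
  have "PB c1 \<rho> \<mu>" using Spec_Seq.prems ns by (auto simp: PB_def)
  with Spec_Seq.IH have ih: "os = obsB c1" "PB c1' \<rho>' \<mu>'" by auto
  show ?case
  proof
    show "os = obsB (Seq c1 c2)" using ih ns by simp
    show "PB (Seq c1' c2) \<rho>' \<mu>'" using ih(2) Spec_Seq.prems
      by (auto simp: PB_def split: if_splits)
  qed
next
  case (Spec_Assign x e \<rho> \<mu> \<beta>) then show ?case
    by (auto simp: PB_def)
qed (auto simp: PB_def isG_def idx_def)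


lemma seq_multi_trans: "seq_multi c \<rho> \<mu> O1 c' \<rho>' \<mu>' \<Longrightarrow> seq_multi c' \<rho>' \<mu>' O2 c'' \<rho>'' \<mu>'' \<Longrightarrow>
  seq_multi c \<rho> \<mu> (O1 @ O2) c'' \<rho>'' \<mu>''"
  by (induction rule: seq_multi.induct) (auto intro: seq_multi.intros)

lemma seq_one: "seq_step c \<rho> \<mu> os c' \<rho>' \<mu>' \<Longrightarrow> seq_multi c \<rho> \<mu> os c' \<rho>' \<mu>'"
  using seq_trans[OF _ seq_refl] by fastforce

lemma seq_multi_Seq: "seq_multi s1 \<rho> \<mu> os s1' \<rho>' \<mu>' \<Longrightarrow> seq_multi (Seq s1 s2) \<rho> \<mu> os (Seq s1' s2) \<rho>' \<mu>'"
  by (induction rule: seq_multi.induct) (auto intro: seq_multi.intros seq_step.intros)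

lemma seq_equiv_multi: "seq_equiv s1 \<rho>1 \<mu>1 s2 \<rho>2 \<mu>2 \<Longrightarrow> seq_multi s1 \<rho>1 \<mu>1 P s1' \<rho>1' \<mu>1' \<Longrightarrow>
  seq_multi s2 \<rho>2 \<mu>2 P s2' \<rho>2' \<mu>2' \<Longrightarrow> seq_equiv s1' \<rho>1' \<mu>1' s2' \<rho>2' \<mu>2'"
  unfolding seq_equiv_def
proof (intro allI impI)
  fix O1 O2 c1' \<rho>1'' \<mu>1'' c2' \<rho>2'' \<mu>2''
  assume H: "\<forall>O1 O2 c1' \<rho>1' \<mu>1' c2' \<rho>2' \<mu>2'.
       seq_multi s1 \<rho>1 \<mu>1 O1 c1' \<rho>1' \<mu>1' \<longrightarrow> seq_multi s2 \<rho>2 \<mu>2 O2 c2' \<rho>2' \<mu>2' \<longrightarrow>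
       prefix O1 O2 \<or> prefix O2 O1"
    and m1: "seq_multi s1 \<rho>1 \<mu>1 P s1' \<rho>1' \<mu>1'" and m2: "seq_multi s2 \<rho>2 \<mu>2 P s2' \<rho>2' \<mu>2'"
    and a: "seq_multi s1' \<rho>1' \<mu>1' O1 c1' \<rho>1'' \<mu>1''" and b: "seq_multi s2' \<rho>2' \<mu>2' O2 c2' \<rho>2'' \<mu>2''"
  have "prefix (P @ O1) (P @ O2) \<or> prefix (P @ O2) (P @ O1)"
    using H seq_multi_trans[OF m1 a] seq_multi_trans[OF m2 b] by blast
  then show "prefix O1 O2 \<or> prefix O2 O1" by simp
qed

lemma seq_equiv_obs: "os1 = os2" if "seq_equiv s1 \<rho>1 \<mu>1 s2 \<rho>2 \<mu>2" "seq_multi s1 \<rho>1 \<mu>1 os1 s1' \<rho>1' \<mu>1'"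
  "seq_multi s2 \<rho>2 \<mu>2 os2 s2' \<rho>2' \<mu>2'" "length os1 = length os2"
proof -
  have "prefix os1 os2 \<or> prefix os2 os1" using that unfolding seq_equiv_def by blast
  then show ?thesis using that(4) by (auto simp: prefix_def)
qed

lemma seq_step_vars: "seq_step s \<rho> \<mu> os s' \<rho>' \<mu>' \<Longrightarrow> used_vars s' \<subseteq> used_vars s"
  by (induction rule: seq_step.induct) auto

lemma seq_multi_vars: "seq_multi s \<rho> \<mu> os s' \<rho>' \<mu>' \<Longrightarrow> used_vars s' \<subseteq> used_vars s"
  by (induction rule: seq_multi.induct) (auto dest: seq_step_vars)

inductive rel :: "sstate \<Rightarrow> com \<Rightarrow> com \<Rightarrow> bool" for \<rho> where
  r_base: "(\<forall>s1 s2. s \<noteq> Seq s1 s2) \<Longrightarrow> rel \<rho> s (uslh s)"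
| r_seq: "rel \<rho> s1 c1 \<Longrightarrow> rel \<rho> (Seq s1 s2) (Seq c1 (uslh s2))"
| r_A1: "beval \<rho> (Bg be) \<Longrightarrow> rel \<rho> s (Seq (A1 be) (uslh s))"
| r_A2: "\<not> beval \<rho> (Bg be) \<Longrightarrow> rel \<rho> s (Seq (A2 be) (uslh s))"
| r_skip: "rel \<rho> s (Seq Skip (uslh s))"
| r_wif: "rel \<rho> (If be (Seq s (While be s)) Skip)
    (Seq (If (Bg be) (Seq (Seq (A1 be) (uslh s)) (While (Bg be) (Seq (A1 be) (uslh s)))) Skip) (A2 be))"
| r_wbody: "rel \<rho> s' c \<Longrightarrow> rel \<rho> (Seq s' (While be s))
    (Seq (Seq c (While (Bg be) (Seq (A1 be) (uslh s)))) (A2 be))"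
| r_wexit: "\<not> beval \<rho> (Bg be) \<Longrightarrow> rel \<rho> Skip (Seq Skip (A2 be))"
| r_wexit2: "\<not> beval \<rho> (Bg be) \<Longrightarrow> rel \<rho> Skip (A2 be)"

lemmas rel_intros_s = rel.intros[simplified]

lemma rel_uslh: "rel \<rho> s (uslh s)"
proof (induction s)
  case (Seq s1 s2) thus ?case by (simp add: rel.r_seq)
qed (rule r_base, simp)+

lemma rel_SS: "rel \<rho> Skip Skip"
  using rel_uslh[of \<rho> Skip] by simp

lemma uslh_Skip: "uslh s = Skip \<longleftrightarrow> s = Skip" "Skip = uslh s \<longleftrightarrow> s = Skip"
  by (cases s; auto)+

lemma rel_Skip: "rel \<rho> s Skip \<Longrightarrow> s = Skip"
  by (induction rule: rel.cases) (auto simp: uslh_Skip)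

lemma rel_safe: "rel \<rho> s c \<Longrightarrow> bvar \<notin> used_vars s \<Longrightarrow> safe c"
  by (induction rule: rel.induct) (auto simp: safe_uslh isG_def)


lemma safe_step: "spec_step c \<rho> \<mu> \<beta> ds os c' \<rho>' \<mu>' \<beta>' \<Longrightarrow> safe c \<Longrightarrow> safe c'"
  by (induction rule: spec_step.induct) auto

lemma If_inv: "spec_step (If b c1 c2) \<rho> \<mu> \<beta> ds os c' \<rho>' \<mu>' \<beta>' \<Longrightarrow>
  \<rho>' = \<rho> \<and> \<mu>' = \<mu> \<and> os = [OBranch (beval \<rho> b)] \<and>
  ((ds = [DStep] \<and> c' = (if beval \<rho> b then c1 else c2) \<and> \<beta>' = \<beta>) \<or>
   (ds = [DForce] \<and> c' = (if beval \<rho> b then c2 else c1) \<and> \<beta>'))"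
  by (auto elim: IfE)

definition GA :: "sstate \<Rightarrow> com \<Rightarrow> astate \<Rightarrow> com \<Rightarrow> sstate \<Rightarrow> astate \<Rightarrow> bool \<Rightarrow> direction list \<Rightarrow> obs list \<Rightarrow> bool" where
  "GA \<rho> s \<mu> c' \<rho>' \<mu>' \<beta>' ds os \<longleftrightarrow>
    (\<exists>s' \<rho>s \<mu>s. seq_multi s \<rho> \<mu> os s' \<rho>s \<mu>s) \<and>
    (ds = [DForce] \<longrightarrow> \<rho>' = \<rho> \<and> \<mu>' = \<mu> \<and> \<beta>' \<and> (\<exists>e. first c' = Assign bvar e \<and> aeval \<rho> e = 1)) \<and>
    (ds \<noteq> [DForce] \<longrightarrow> \<not> \<beta>' \<and> \<rho>' bvar = 0 \<and>
        (\<exists>s'. seq_multi s \<rho> \<mu> os s' \<rho>' \<mu>' \<and> rel \<rho>' s' c' \<and> bvar \<notin> used_vars s'))"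

lemma GA_seq: "GA \<rho> s1 \<mu> c1' \<rho>' \<mu>' \<beta>' ds os \<Longrightarrow> bvar \<notin> used_vars s2 \<Longrightarrow>
   GA \<rho> (Seq s1 s2) \<mu> (Seq c1' (uslh s2)) \<rho>' \<mu>' \<beta>' ds os"
  unfolding GA_def
  by (auto intro: seq_multi_Seq rel.r_seq)

lemma GA_wbody: "GA \<rho> s1 \<mu> c1' \<rho>' \<mu>' \<beta>' ds os \<Longrightarrow> bvar \<notin> used_vars (While be s) \<Longrightarrow>
   GA \<rho> (Seq s1 (While be s)) \<mu> (Seq (Seq c1' (While (Bg be) (Seq (A1 be) (uslh s)))) (A2 be)) \<rho>' \<mu>' \<beta>' ds os"
proof -
  assume g: "GA \<rho> s1 \<mu> c1' \<rho>' \<mu>' \<beta>' ds os" and v: "bvar \<notin> used_vars (While be s)"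
  have 1: "\<exists>s' \<rho>s \<mu>s. seq_multi (Seq s1 (While be s)) \<rho> \<mu> os s' \<rho>s \<mu>s"
    using g unfolding GA_def by (auto intro: seq_multi_Seq)
  have 2: "ds = [DForce] \<longrightarrow> \<rho>' = \<rho> \<and> \<mu>' = \<mu> \<and> \<beta>' \<and>
     (\<exists>e. first (Seq (Seq c1' (While (Bg be) (Seq (A1 be) (uslh s)))) (A2 be)) = Assign bvar e \<and> aeval \<rho> e = 1)"
    using g unfolding GA_def by (metis com.distinct(1) first.simps(1) first.simps(2))
  have 3: "ds \<noteq> [DForce] \<longrightarrow> \<not> \<beta>' \<and> \<rho>' bvar = 0 \<and>
        (\<exists>s'. seq_multi (Seq s1 (While be s)) \<rho> \<mu> os s' \<rho>' \<mu>' \<and>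
           rel \<rho>' s' (Seq (Seq c1' (While (Bg be) (Seq (A1 be) (uslh s)))) (A2 be)) \<and> bvar \<notin> used_vars s')"
  proof
    assume "ds \<noteq> [DForce]"
    then obtain s' where "\<not> \<beta>'" "\<rho>' bvar = 0" "seq_multi s1 \<rho> \<mu> os s' \<rho>' \<mu>'" "rel \<rho>' s' c1'" "bvar \<notin> used_vars s'"
      using g unfolding GA_def by blast
    then show "\<not> \<beta>' \<and> \<rho>' bvar = 0 \<and>
        (\<exists>s'. seq_multi (Seq s1 (While be s)) \<rho> \<mu> os s' \<rho>' \<mu>' \<and>
           rel \<rho>' s' (Seq (Seq c1' (While (Bg be) (Seq (A1 be) (uslh s)))) (A2 be)) \<and> bvar \<notin> used_vars s')"
      using v by (intro conjI exI[of _ "Seq s' (While be s)"]) (auto intro: seq_multi_Seq rel.r_wbody rel_intros_s)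
  qed
  show ?thesis using 1 2 3 unfolding GA_def by blast
qed

lemma phaseA_step:
  "rel \<rho> s c \<Longrightarrow> spec_step c \<rho> \<mu> \<beta> ds os c' \<rho>' \<mu>' \<beta>' \<Longrightarrow> \<rho> bvar = 0 \<Longrightarrow>
   bvar \<notin> used_vars s \<Longrightarrow> \<not> \<beta> \<Longrightarrow> GA \<rho> s \<mu> c' \<rho>' \<mu>' \<beta>' ds os"
proof (induction arbitrary: c' \<rho>' \<mu>' \<beta>' ds os rule: rel.induct)
  case (r_base s)
  show ?case
  proof (cases s)
    case Skip then show ?thesis using r_base.prems by simp
  next
    case (Assign x e)
    with r_base.prems have x: "x \<noteq> bvar" and st: "spec_step (Assign x e) \<rho> \<mu> \<beta> ds os c' \<rho>' \<mu>' \<beta>'" by auto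
    from st have "c' = Skip \<and> \<rho>' = \<rho>(x := aeval \<rho> e) \<and> \<mu>' = \<mu> \<and> \<beta>' = \<beta> \<and> ds = [] \<and> os = []"
      by (auto elim: AssignE)
    moreover have "seq_multi (Assign x e) \<rho> \<mu> [] Skip (\<rho>(x := aeval \<rho> e)) \<mu>"
      by (rule seq_one) (rule Seq_Assign)
    ultimately show ?thesis using Assign x r_base.prems unfolding GA_def by (auto intro: rel_SS)
  next
    case (Seq s1 s2) with r_base.hyps show ?thesis by simp
  next
    case (If be s1 s2)
    have bv: "beval \<rho> (Bg be) = beval \<rho> be" using r_base.prems by simp
    have sq: "seq_multi (If be s1 s2) \<rho> \<mu> [OBranch (beval \<rho> be)]
       (if beval \<rho> be then s1 else s2) \<rho> \<mu>" by (rule seq_one) (rule Seq_If, simp)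
    have st: "spec_step (If (Bg be) (Seq (A1 be) (uslh s1)) (Seq (A2 be) (uslh s2))) \<rho> \<mu> \<beta> ds os c' \<rho>' \<mu>' \<beta>'"
      using r_base.prems If by simp
    note i = If_inv[OF st]
    have r1: "rel \<rho> s1 (Seq (A1 be) (uslh s1))" if "beval \<rho> be"
      using that r_base.prems by (auto intro!: rel_intros_s)
    have r2: "rel \<rho> s2 (Seq (A2 be) (uslh s2))" if "\<not> beval \<rho> be"
      using that r_base.prems by (auto intro!: rel_intros_s)
    show ?thesis
      using i sq r1 r2 r_base.prems bv If unfolding GA_def
      by (cases "beval \<rho> be") auto
  next
    case (While be s0)
    let ?W = "While (Bg be) (Seq (A1 be) (uslh s0))"
    have st: "spec_step (Seq ?W (A2 be)) \<rho> \<mu> \<beta> ds os c' \<rho>' \<mu>' \<beta>'"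
      using r_base.prems While by simp
    have sq: "seq_multi (While be s0) \<rho> \<mu> [] (If be (Seq s0 (While be s0)) Skip) \<rho> \<mu>"
      by (rule seq_one) (rule Seq_While)
    have rw: "rel \<rho> (If be (Seq s0 (While be s0)) Skip)
       (Seq (If (Bg be) (Seq (Seq (A1 be) (uslh s0)) ?W) Skip) (A2 be))" by (rule rel.r_wif)
    show ?thesis
    proof (rule SeqE[OF st])
      fix c1'' assume a: "c' = Seq c1'' (A2 be)" "spec_step ?W \<rho> \<mu> \<beta> ds os c1'' \<rho>' \<mu>' \<beta>'"
      from a(2) have "c1'' = If (Bg be) (Seq (Seq (A1 be) (uslh s0)) ?W) Skip \<and> ds = [] \<and> os = []
         \<and> \<rho>' = \<rho> \<and> \<mu>' = \<mu> \<and> \<beta>' = \<beta>" by (auto elim: WhileE)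
      then show ?thesis using a(1) sq rw r_base.prems While unfolding GA_def by auto
    next
      assume "?W = Skip" then show ?thesis by simp
    qed
  next
    case (ARead x a ie)
    have st: "spec_step (ARead x a (ACond (BCmp (=) (AVar bvar) (ANum 1)) (ANum 0) ie)) \<rho> \<mu> \<beta> ds os c' \<rho>' \<mu>' \<beta>'"
      using r_base.prems ARead by simp
    have x: "x \<noteq> bvar" using r_base.prems ARead by auto
    from st have "ds = [DStep] \<and> os = [ORead a (aeval \<rho> ie)] \<and> c' = Skip \<and>
        \<rho>' = \<rho>(x := \<mu> a ! aeval \<rho> ie) \<and> \<mu>' = \<mu> \<and> \<beta>' = \<beta> \<and> aeval \<rho> ie < length (\<mu> a)"
      using r_base.prems by (auto elim: ReadE)
    moreover have "aeval \<rho> ie < length (\<mu> a) \<Longrightarrow> seq_multi (ARead x a ie) \<rho> \<mu> [ORead a (aeval \<rho> ie)] Skip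
        (\<rho>(x := \<mu> a ! aeval \<rho> ie)) \<mu>"
      by (rule seq_one) (rule Seq_Read, auto)
    ultimately show ?thesis using x ARead r_base.prems unfolding GA_def by (auto intro: rel_SS)
  next
    case (AWrite a ie e)
    have st: "spec_step (AWrite a (ACond (BCmp (=) (AVar bvar) (ANum 1)) (ANum 0) ie) e) \<rho> \<mu> \<beta> ds os c' \<rho>' \<mu>' \<beta>'"
      using r_base.prems AWrite by simp
    from st have "ds = [DStep] \<and> os = [OWrite a (aeval \<rho> ie)] \<and> c' = Skip \<and>
        \<rho>' = \<rho> \<and> \<mu>' = \<mu>(a := (\<mu> a)[aeval \<rho> ie := aeval \<rho> e]) \<and> \<beta>' = \<beta> \<and> aeval \<rho> ie < length (\<mu> a)"
      using r_base.prems by (auto elim: WriteE)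
    moreover have "aeval \<rho> ie < length (\<mu> a) \<Longrightarrow> seq_multi (AWrite a ie e) \<rho> \<mu> [OWrite a (aeval \<rho> ie)] Skip
        \<rho> (\<mu>(a := (\<mu> a)[aeval \<rho> ie := aeval \<rho> e]))"
      by (rule seq_one) (rule Seq_Write, auto)
    ultimately show ?thesis using AWrite r_base.prems unfolding GA_def by (auto intro: rel_SS)
  qed
next
  case (r_seq s1 c1 s2)
  show ?case
  proof (rule SeqE[OF r_seq.prems(1)])
    fix c1'' assume a: "c' = Seq c1'' (uslh s2)" "spec_step c1 \<rho> \<mu> \<beta> ds os c1'' \<rho>' \<mu>' \<beta>'"
    have "GA \<rho> s1 \<mu> c1'' \<rho>' \<mu>' \<beta>' ds os" using r_seq.IH[OF a(2)] r_seq.prems by auto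
    then show ?thesis using GA_seq a(1) r_seq.prems by auto
  next
    assume a: "c1 = Skip" "ds = []" "os = []" "c' = uslh s2" "\<rho>' = \<rho>" "\<mu>' = \<mu>" "\<beta>' = \<beta>"
    then have "s1 = Skip" using r_seq.hyps rel_Skip by blast
    then have "seq_multi (Seq s1 s2) \<rho> \<mu> [] s2 \<rho> \<mu>" by (auto intro: seq_one seq_step.intros)
    then show ?thesis using a r_seq.prems unfolding GA_def by (auto intro: rel_uslh)
  qed
next
  case (r_A1 be s)
  then show ?case by (auto elim!: SeqE AssignE simp: GA_def fun_upd_idem intro: seq_refl rel_intros_s rel_uslh; (blast intro: seq_multi.seq_refl rel.intros rel_uslh rel_SS)?)
next
  case (r_A2 be s)
  then show ?case by (auto elim!: SeqE AssignE simp: GA_def fun_upd_idem intro: seq_refl rel_intros_s rel_uslh; (blast intro: seq_multi.seq_refl rel.intros rel_uslh rel_SS)?)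
next
  case (r_skip s)
  then show ?case by (auto elim!: SeqE AssignE simp: GA_def fun_upd_idem intro: seq_refl rel_intros_s rel_uslh; (blast intro: seq_multi.seq_refl rel.intros rel_uslh rel_SS)?)
next
  case (r_wif be s)
  let ?W = "While (Bg be) (Seq (A1 be) (uslh s))"
  let ?T = "Seq (Seq (A1 be) (uslh s)) ?W"
  have bv: "beval \<rho> (Bg be) = beval \<rho> be" using r_wif.prems by simp
  have sq: "seq_multi (If be (Seq s (While be s)) Skip) \<rho> \<mu> [OBranch (beval \<rho> be)]
     (if beval \<rho> be then Seq s (While be s) else Skip) \<rho> \<mu>" by (rule seq_one) (rule Seq_If, simp)
  show ?case
  proof (rule SeqE[OF r_wif.prems(1)])
    fix c1'' assume a: "c' = Seq c1'' (A2 be)" "spec_step (If (Bg be) ?T Skip) \<rho> \<mu> \<beta> ds os c1'' \<rho>' \<mu>' \<beta>'"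
    note i = If_inv[OF a(2)]
    have rb: "rel \<rho> (Seq s (While be s)) (Seq ?T (A2 be))" if "beval \<rho> be"
      using that r_wif.prems by (auto intro!: rel_intros_s)
    have rs: "rel \<rho> Skip (Seq Skip (A2 be))" if "\<not> beval \<rho> be"
      using that r_wif.prems by (auto intro!: rel_intros_s)
    show ?thesis
      using i a(1) sq rb rs r_wif.prems bv unfolding GA_def
      by (cases "beval \<rho> be") auto
  next
    assume "If (Bg be) ?T Skip = Skip" then show ?thesis by simp
  qed
next
  case (r_wbody s0 c be s)
  show ?case
  proof (rule SeqE[OF r_wbody.prems(1)])
    fix c1'' assume a: "c' = Seq c1'' (A2 be)"
      "spec_step (Seq c (While (Bg be) (Seq (A1 be) (uslh s)))) \<rho> \<mu> \<beta> ds os c1'' \<rho>' \<mu>' \<beta>'"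
    show ?thesis
    proof (rule SeqE[OF a(2)])
      fix c2'' assume b: "c1'' = Seq c2'' (While (Bg be) (Seq (A1 be) (uslh s)))"
        "spec_step c \<rho> \<mu> \<beta> ds os c2'' \<rho>' \<mu>' \<beta>'"
      have "GA \<rho> s0 \<mu> c2'' \<rho>' \<mu>' \<beta>' ds os" using r_wbody.IH[OF b(2)] r_wbody.prems by auto
      then show ?thesis using GA_wbody[of \<rho> s0 \<mu> c2'' \<rho>' \<mu>' \<beta>' ds os be s] a(1) b(1) r_wbody.prems by auto
    next
      assume b: "c = Skip" "ds = []" "os = []" "c1'' = While (Bg be) (Seq (A1 be) (uslh s))"
        "\<rho>' = \<rho>" "\<mu>' = \<mu>" "\<beta>' = \<beta>"
      then have "s0 = Skip" using r_wbody.hyps rel_Skip by blast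
      then have m: "seq_multi (Seq s0 (While be s)) \<rho> \<mu> [] (While be s) \<rho> \<mu>" by (auto intro: seq_one seq_step.intros)
      have "rel \<rho> (While be s) (uslh (While be s))" by (rule rel_uslh)
      then show ?thesis using m a b r_wbody.prems unfolding GA_def by auto
    qed
  next
    assume "Seq c (While (Bg be) (Seq (A1 be) (uslh s))) = Skip"
    then show ?thesis by simp
  qed
next
  case (r_wexit be)
  then show ?case by (auto elim!: SeqE AssignE simp: GA_def fun_upd_idem intro: seq_refl rel_intros_s rel_uslh; (blast intro: seq_multi.seq_refl rel.intros rel_uslh rel_SS)?)
next
  case (r_wexit2 be)
  then show ?case by (auto elim!: SeqE AssignE simp: GA_def fun_upd_idem intro: seq_refl rel_intros_s rel_uslh; (blast intro: seq_multi.seq_refl rel.intros rel_uslh rel_SS)?)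
qed


definition R :: "com \<Rightarrow> sstate \<Rightarrow> astate \<Rightarrow> bool \<Rightarrow> sstate \<Rightarrow> astate \<Rightarrow> bool \<Rightarrow> bool" where
  "R c \<rho>1 \<mu>1 \<beta>1 \<rho>2 \<mu>2 \<beta>2 \<longleftrightarrow>
    (\<not> \<beta>1 \<and> \<not> \<beta>2 \<and> \<rho>1 bvar = 0 \<and> \<rho>2 bvar = 0 \<and> (\<forall>a. length (\<mu>1 a) > 0) \<and> (\<forall>a. length (\<mu>2 a) > 0) \<and>
      (\<exists>s1 s2. rel \<rho>1 s1 c \<and> rel \<rho>2 s2 c \<and> bvar \<notin> used_vars s1 \<and> bvar \<notin> used_vars s2 \<and>
          seq_equiv s1 \<rho>1 \<mu>1 s2 \<rho>2 \<mu>2)) \<or>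
    (PB c \<rho>1 \<mu>1 \<and> PB c \<rho>2 \<mu>2)"

lemma R_step:
  assumes r: "R c \<rho>1 \<mu>1 \<beta>1 \<rho>2 \<mu>2 \<beta>2"
    and s1: "spec_step c \<rho>1 \<mu>1 \<beta>1 ds os1 c1' \<rho>1' \<mu>1' \<beta>1'"
    and s2: "spec_step c \<rho>2 \<mu>2 \<beta>2 ds os2 c2' \<rho>2' \<mu>2' \<beta>2'"
  shows "os1 = os2 \<and> c1' = c2' \<and> R c1' \<rho>1' \<mu>1' \<beta>1' \<rho>2' \<mu>2' \<beta>2'"
proof (cases "PB c \<rho>1 \<mu>1 \<and> PB c \<rho>2 \<mu>2")
  case True
  then have "os1 = obsB c" "PB c1' \<rho>1' \<mu>1'" "os2 = obsB c" "PB c2' \<rho>2' \<mu>2'"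
    using PB_step[OF s1] PB_step[OF s2] by auto
  moreover then have "c1' = c2'" using step_det[OF s1] s2 by simp
  ultimately show ?thesis unfolding R_def by simp
next
  case False
  then obtain t1 t2 where A: "\<not> \<beta>1" "\<not> \<beta>2" "\<rho>1 bvar = 0" "\<rho>2 bvar = 0" "\<forall>a. length (\<mu>1 a) > 0"
     "\<forall>a. length (\<mu>2 a) > 0" "rel \<rho>1 t1 c" "rel \<rho>2 t2 c" "bvar \<notin> used_vars t1" "bvar \<notin> used_vars t2"
     "seq_equiv t1 \<rho>1 \<mu>1 t2 \<rho>2 \<mu>2"
    using r unfolding R_def by blast
  have g1: "GA \<rho>1 t1 \<mu>1 c1' \<rho>1' \<mu>1' \<beta>1' ds os1" using phaseA_step[OF A(7) s1] A by auto
  have g2: "GA \<rho>2 t2 \<mu>2 c2' \<rho>2' \<mu>2' \<beta>2' ds os2" using phaseA_step[OF A(8) s2] A by auto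
  have len: "length os1 = length os2" using step_len[OF s1] step_len[OF s2] by simp
  have oeq: "os1 = os2"
  proof -
    obtain u1 r1 m1 where "seq_multi t1 \<rho>1 \<mu>1 os1 u1 r1 m1" using g1 unfolding GA_def by blast
    moreover obtain u2 r2 m2 where "seq_multi t2 \<rho>2 \<mu>2 os2 u2 r2 m2" using g2 unfolding GA_def by blast
    ultimately show ?thesis using seq_equiv_obs A(11) len by blast
  qed
  have ceq: "c1' = c2'" using step_det[OF s1] s2 oeq by simp
  have ne1: "\<forall>a. length (\<mu>1' a) > 0" using step_nonempty[OF s1] A by simp
  have ne2: "\<forall>a. length (\<mu>2' a) > 0" using step_nonempty[OF s2] A by simp
  have sc: "safe c1'" using safe_step[OF s1] rel_safe[OF A(7) A(9)] by simp
  show ?thesis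
  proof (cases "ds = [DForce]")
    case True
    then have "PB c1' \<rho>1' \<mu>1'" "PB c2' \<rho>2' \<mu>2'"
      using g1 g2 sc ceq ne1 ne2 unfolding GA_def PB_def by auto
    then show ?thesis using oeq ceq unfolding R_def by simp
  next
    case False
    then obtain u1 u2 where B: "\<not> \<beta>1'" "\<rho>1' bvar = 0" "seq_multi t1 \<rho>1 \<mu>1 os1 u1 \<rho>1' \<mu>1'" "rel \<rho>1' u1 c1'"
       "bvar \<notin> used_vars u1" "\<not> \<beta>2'" "\<rho>2' bvar = 0" "seq_multi t2 \<rho>2 \<mu>2 os2 u2 \<rho>2' \<mu>2'" "rel \<rho>2' u2 c2'"
       "bvar \<notin> used_vars u2"
      using g1 g2 unfolding GA_def by blast
    have "seq_equiv u1 \<rho>1' \<mu>1' u2 \<rho>2' \<mu>2'" using seq_equiv_multi[OF A(11) B(3)] B(8) oeq by simp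
    then show ?thesis using B oeq ceq ne1 ne2 unfolding R_def by blast
  qed
qed

lemma lockstep:
  "spec_multi c \<rho>1 \<mu>1 \<beta>1 D O1 c1 \<rho>1' \<mu>1' \<beta>1' \<Longrightarrow> R c \<rho>1 \<mu>1 \<beta>1 \<rho>2 \<mu>2 \<beta>2 \<Longrightarrow>
   spec_multi c \<rho>2 \<mu>2 \<beta>2 D O2 c2 \<rho>2' \<mu>2' \<beta>2' \<Longrightarrow> O1 = O2"
proof (induction arbitrary: \<rho>2 \<mu>2 \<beta>2 O2 c2 \<rho>2' \<mu>2' \<beta>2' rule: spec_multi.induct)
  case (spec_refl c \<rho> \<mu> \<beta>)
  then show ?case using multi_len by fastforce
next
  case (spec_trans c \<rho> \<mu> \<beta> ds os c' \<rho>' \<mu>' \<beta>' ds' os' c'' \<rho>'' \<mu>'' \<beta>'')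
  from spec_trans.prems(2) show ?case
  proof (cases rule: spec_multi.cases)
    case spec_refl
    then have "ds = []" "ds' = []" by auto
    then show ?thesis using step_len[OF spec_trans.hyps(1)] multi_len[OF spec_trans.hyps(2)] spec_refl by simp
  next
    case (spec_trans ds2 os2 cm \<rho>m \<mu>m \<beta>m ds2' os2')
    have stp: "spec_step c \<rho>2 \<mu>2 \<beta>2 ds2 os2 cm \<rho>m \<mu>m \<beta>m" using spec_trans by simp
    have mlt: "spec_multi cm \<rho>m \<mu>m \<beta>m ds2' os2' c2 \<rho>2' \<mu>2' \<beta>2'" using spec_trans by simp
    have deq: "ds @ ds' = ds2 @ ds2'" and oeq2: "O2 = os2 @ os2'" using spec_trans by simp_all
    have al: "ds = [] \<longleftrightarrow> ds2 = []" using step_align[OF spec_trans.hyps(1) stp] .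
    have l1: "length ds \<le> 1" "length ds2 \<le> 1" using step_len[OF spec_trans.hyps(1)] step_len[OF stp] by auto
    have "ds = ds2 \<and> ds' = ds2'"
    proof (cases "ds = []")
      case True then show ?thesis using al deq by simp
    next
      case False
      then obtain d where "ds = [d]" using l1 by (cases ds) auto
      moreover obtain d2 where "ds2 = [d2]" using False al l1 by (cases ds2) auto
      ultimately show ?thesis using deq by simp
    qed
    then have eqs: "ds = ds2" "ds' = ds2'" by auto
    have st: "os = os2 \<and> c' = cm \<and> R c' \<rho>' \<mu>' \<beta>' \<rho>m \<mu>m \<beta>m"
      using R_step[OF spec_trans.prems(1) spec_trans.hyps(1) stp[folded eqs(1)]] .
    then have "os' = os2'" using spec_trans.IH mlt eqs(2) by blast
    then show ?thesis using st oeq2 by simp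
  qed
qed

theorem theorem3p2:
  fixes c :: com and \<rho>1 \<rho>2 :: sstate and \<mu>1 \<mu>2 :: astate
  assumes "bvar \<notin> used_vars c"
    and "\<rho>1 bvar = 0" and "\<rho>2 bvar = 0"
    and "\<forall>a. length (\<mu>1 a) > 0" and "\<forall>a. length (\<mu>2 a) > 0"
    and "seq_equiv c \<rho>1 \<mu>1 c \<rho>2 \<mu>2"
  shows "spec_equiv (uslh c) \<rho>1 \<mu>1 False (uslh c) \<rho>2 \<mu>2 False"
proof -
  have "R (uslh c) \<rho>1 \<mu>1 False \<rho>2 \<mu>2 False"
    unfolding R_def using assms rel_uslh by blast
  then show ?thesis unfolding spec_equiv_def using lockstep by blast
qed

end
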